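(* Let $\mathcal{T}$ be an unweighted tree on $L$ vertices with diameter $\mathrm{diam}(\mathcal{T})$, and let $f:\mathbb{N}\to\mathbb{R}$ be an arbitrary function. Then the mask matrix $\mathbf{M} = [f(\mathrm{dist}_{\mathcal{T}}(i,j))]_{i,j=1,\dots,L}$ supports matrix-vector multiplication in time $O(L\cdot\mathrm{diam}(\mathcal{T}))$.
   Context: $\mathrm{dist}_{\mathcal{T}}(i,j)$ is the number of edges on the path between $i$ and $j$; $\mathrm{diam}(\mathcal{T})$ is the maximum of $\mathrm{dist}_{\mathcal{T}}(i,j)$ over all pairs. Values of $f$ are assumed available in $O(1)$ time each; time counts arithmetic operations. *)

theory Defs
  imports Complex_Main
begin

inductive walk :: "(nat \<Rightarrow> nat \<Rightarrow> bool) \<Rightarrow> nat \<Rightarrow> nat \<Rightarrow> nat \<Rightarrow> bool"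
  for E where
  walk_refl: "walk E 0 i i"
| walk_step: "E i k \<Longrightarrow> walk E n k j \<Longrightarrow> walk E (Suc n) i j"

definition is_tree :: "nat \<Rightarrow> (nat \<Rightarrow> nat \<Rightarrow> bool) \<Rightarrow> bool" where
  "is_tree L E \<longleftrightarrow> L \<ge> 1
     \<and> (\<forall>i j. E i j \<longrightarrow> i < L \<and> j < L)
     \<and> (\<forall>i j. E i j \<longrightarrow> E j i)
     \<and> (\<forall>i. \<not> E i i)
     \<and> (\<forall>i<L. \<forall>j<L. \<exists>n. walk E n i j)
     \<and> card {(i, j). E i j \<and> i < j} = L - 1"

text \<open>Number of edges on the (unique) path between i and j = length of a shortest walk.\<close>
definition tdist :: "(nat \<Rightarrow> nat \<Rightarrow> bool) \<Rightarrow> nat \<Rightarrow> nat \<Rightarrow> nat" where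
  "tdist E i j = (LEAST n. walk E n i j)"

definition tdiam :: "nat \<Rightarrow> (nat \<Rightarrow> nat \<Rightarrow> bool) \<Rightarrow> nat" where
  "tdiam L E = Max {tdist E i j | i j. i < L \<and> j < L}"

section \<open>Straight-line arithmetic programs (cost = number of instructions)\<close>

text \<open>LoadX i reads input entry x_i, LoadF k reads the value f(k) (available in O(1)),
  the arithmetic instructions combine earlier registers.\<close>

datatype instr = LoadX nat | LoadF nat | Const real
  | Add nat nat | Sub nat nat | Mul nat nat

fun step :: "(nat \<Rightarrow> real) \<Rightarrow> (nat \<Rightarrow> real) \<Rightarrow> real list \<Rightarrow> instr \<Rightarrow> real list" where
  "step f x rs (LoadX i) = rs @ [x i]"
| "step f x rs (LoadF k) = rs @ [f k]"
| "step f x rs (Const c) = rs @ [c]"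
| "step f x rs (Add a b) = rs @ [rs ! a + rs ! b]"
| "step f x rs (Sub a b) = rs @ [rs ! a - rs ! b]"
| "step f x rs (Mul a b) = rs @ [rs ! a * rs ! b]"

definition exec :: "(nat \<Rightarrow> real) \<Rightarrow> (nat \<Rightarrow> real) \<Rightarrow> instr list \<Rightarrow> real list" where
  "exec f x prog = foldl (step f x) [] prog"

fun instr_ok :: "nat \<Rightarrow> instr \<Rightarrow> bool" where
  "instr_ok n (Add a b) = (a < n \<and> b < n)"
| "instr_ok n (Sub a b) = (a < n \<and> b < n)"
| "instr_ok n (Mul a b) = (a < n \<and> b < n)"
| "instr_ok n _ = True"

definition wf_prog :: "instr list \<Rightarrow> bool" where
  "wf_prog prog \<longleftrightarrow> (\<forall>k<length prog. instr_ok k (prog ! k))"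

end

theory Submission
  imports Defs
begin


lemma walk_snoc: "walk E n i k \<Longrightarrow> E k j \<Longrightarrow> walk E (Suc n) i j"
  by (induction rule: walk.induct) (auto intro: walk.intros)

lemma walk_app: "walk E m i k \<Longrightarrow> walk E n k j \<Longrightarrow> walk E (m+n) i j"
  by (induction rule: walk.induct) (auto intro: walk.intros)

lemma walk_sym: assumes "\<forall>a b. E a b \<longrightarrow> E b a" "walk E n i j" shows "walk E n j i"
  using assms(2) by (induction rule: walk.induct) (auto intro: walk.intros walk_snoc assms(1)[rule_format])

lemma walk_0: "walk E 0 i j \<Longrightarrow> i = j"
  by (auto elim: walk.cases)

lemma walk_Suc: "walk E (Suc n) i j \<Longrightarrow> \<exists>k. E i k \<and> walk E n k j"
  by (auto elim: walk.cases)

locale tr = fixes L :: nat and E :: "nat \<Rightarrow> nat \<Rightarrow> bool"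
  assumes tree: "is_tree L E"
begin

lemma Lpos: "L \<ge> 1" using tree by (simp add: is_tree_def)
lemma Ebound: "E i j \<Longrightarrow> i < L \<and> j < L" using tree by (simp add: is_tree_def)
lemma Esym: "\<forall>a b. E a b \<longrightarrow> E b a" using tree by (simp add: is_tree_def)
lemma Eirr: "\<not> E i i" using tree by (simp add: is_tree_def)
lemma conn: "i < L \<Longrightarrow> j < L \<Longrightarrow> \<exists>n. walk E n i j" using tree by (simp add: is_tree_def)
lemma Ecard: "card {(i, j). E i j \<and> i < j} = L - 1" using tree by (simp add: is_tree_def)

lemma tdist_walk: "i < L \<Longrightarrow> j < L \<Longrightarrow> walk E (tdist E i j) i j"
  unfolding tdist_def using conn by (metis LeastI_ex)
lemma tdist_le: "walk E n i j \<Longrightarrow> tdist E i j \<le> n"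
  unfolding tdist_def by (rule Least_le)

definition h where "h v = tdist E 0 v"

lemma h0: "h 0 = 0"
  using tdist_le[of 0 0 0] walk_refl[of E 0] by (simp add: h_def)

lemma h_zero: assumes "v < L" "h v = 0" shows "v = 0"
proof -
  have "walk E (h v) 0 v" using tdist_walk[of 0 v] assms Lpos by (simp add: h_def)
  thus ?thesis using assms(2) walk_0 by (metis)
qed

lemma par_ex: assumes "v < L" "v \<noteq> 0" shows "\<exists>u. E v u \<and> h u + 1 = h v"
proof -
  have w: "walk E (h v) 0 v" using tdist_walk[of 0 v] assms Lpos by (simp add: h_def)
  have w2: "walk E (h v) v 0" by (rule walk_sym[OF Esym w])
  have "h v \<noteq> 0" using h_zero assms by blast
  then obtain m where m: "h v = Suc m" by (cases "h v") auto
  have "walk E (Suc m) v 0" using w2 m by simp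
  then obtain k where k: "E v k" "walk E m k 0" using walk_Suc by metis
  have kL: "k < L" using Ebound k(1) by simp
  have "walk E m 0 k" by (rule walk_sym[OF Esym k(2)])
  hence "h k \<le> m" by (simp add: h_def tdist_le)
  moreover have "E k v" using Esym k(1) by simp
  hence "walk E (Suc (h k)) 0 v"
    using walk_snoc[OF tdist_walk[OF _ kL]] Lpos unfolding h_def by simp
  hence "h v \<le> Suc (h k)" unfolding h_def by (rule tdist_le)
  ultimately show ?thesis using k(1) m by (intro exI[of _ k]) simp
qed

definition par where "par v = (if v = 0 then 0 else SOME u. E v u \<and> h u + 1 = h v)"

lemma par: "v < L \<Longrightarrow> v \<noteq> 0 \<Longrightarrow> E v (par v) \<and> h (par v) + 1 = h v"
  unfolding par_def using someI_ex[OF par_ex] by simp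

lemma par_lt: "v < L \<Longrightarrow> par v < L"
  using par Ebound Lpos by (cases "v = 0") (auto simp: par_def)

lemma h_par: assumes "v < L" shows "h (par v) = h v - 1"
proof (cases "v = 0")
  case True thus ?thesis by (simp add: par_def h0)
next
  case False
  have "h (par v) + 1 = h v" using par[OF assms False] by simp
  thus ?thesis by simp
qed

lemma hpos: "v < L \<Longrightarrow> v \<noteq> 0 \<Longrightarrow> h v \<ge> 1"
  using par by fastforce

lemma mm1: "(min (a::nat) b, max a b) = (min c d, max c d) \<Longrightarrow> a \<noteq> c \<Longrightarrow> a = d \<and> c = b"
  by (cases "a \<le> b"; cases "c \<le> d") auto

lemma mm2: "(min (a::nat) b, max a b) = (min c d, max c d) \<Longrightarrow> (a = c \<and> b = d) \<or> (a = d \<and> b = c)"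
  by (cases "a \<le> b"; cases "c \<le> d") auto

lemma edge_cases: assumes "E a b" shows "(a \<noteq> 0 \<and> b = par a) \<or> (b \<noteq> 0 \<and> a = par b)"
proof -
  define S where "S = {(i, j). E i j \<and> i < j}"
  define g where "g = (\<lambda>v. (min v (par v), max v (par v)))"
  define P where "P = g ` {1..<L}"
  have PS: "P \<subseteq> S"
  proof
    fix p assume "p \<in> P"
    then obtain v where v: "v \<in> {1..<L}" "p = g v" by (auto simp: P_def)
    have e: "E v (par v)" "h (par v) + 1 = h v" using par[of v] v by auto
    have e2: "E (par v) v" using e(1) Esym by blast
    have "h (par v) \<noteq> h v" using e by simp
    hence "v \<noteq> par v" by metis
    hence "v < par v \<or> par v < v" by arith
    thus "p \<in> S"
    proof
      assume "v < par v" thus ?thesis using e v by (simp add: S_def g_def min_def max_def)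
    next
      assume "par v < v" thus ?thesis using e2 v by (simp add: S_def g_def min_def max_def)
    qed
  qed
  have inj: "inj_on g {1..<L}"
  proof
    fix v w assume vw: "v \<in> {1..<L}" "w \<in> {1..<L}" "g v = g w"
    show "v = w"
    proof (rule ccontr)
      assume "v \<noteq> w"
      have "v = par w \<and> w = par v" using mm1[of v "par v" w "par w"] vw(3) \<open>v \<noteq> w\<close> unfolding g_def by blast
      hence "h v = h (par w)" "h w = h (par v)" by metis+
      moreover have "h (par v) + 1 = h v" "h (par w) + 1 = h w" using par[of v] par[of w] vw by auto
      ultimately show False by linarith
    qed
  qed
  have cP: "card P = L - 1" using card_image[OF inj] by (simp add: P_def)
  have fS: "finite S" by (rule finite_subset[of _ "{..<L} \<times> {..<L}"]) (auto simp: S_def dest: Ebound)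
  have "P = S" using card_subset_eq[OF fS PS] cP Ecard by (simp add: S_def)
  have ab: "a \<noteq> b" using assms Eirr by auto
  have "(min a b, max a b) \<in> S"
  proof (cases "a < b")
    case True thus ?thesis using assms by (simp add: S_def min_def max_def)
  next
    case False
    have "E b a" using Esym assms by blast
    thus ?thesis using False ab by (simp add: S_def min_def max_def)
  qed
  then obtain v where v: "v \<in> {1..<L}" "(min a b, max a b) = g v" using \<open>P = S\<close> by (auto simp: P_def)
  have "(a = v \<and> b = par v) \<or> (a = par v \<and> b = v)" using mm2 v(2) by (simp add: g_def)
  thus ?thesis using v(1) by auto
qed

end


context tr begin

definition anc where "anc n v = (par ^^ n) v"

lemma anc_0[simp]: "anc 0 v = v" by (simp add: anc_def)
lemma anc_Suc: "anc (Suc n) v = par (anc n v)" by (simp add: anc_def)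
lemma anc_Suc': "anc (Suc n) v = anc n (par v)" by (simp add: anc_def funpow_swap1)

lemma anc_lt: "v < L \<Longrightarrow> anc n v < L"
  by (induction n) (auto simp: anc_Suc par_lt)

lemma h_anc: "v < L \<Longrightarrow> h (anc n v) = h v - n"
  by (induction n) (auto simp: anc_Suc h_par anc_lt)

lemma anc_h: "v < L \<Longrightarrow> anc (h v) v = 0"
  using h_zero[of "anc (h v) v"] h_anc[of v "h v"] anc_lt by simp

lemma h_nz: "v < L \<Longrightarrow> v \<noteq> 0 \<Longrightarrow> h v \<noteq> 0"
  using hpos by fastforce

definition Dm where
  "Dm i j = (LEAST s. \<exists>a b. a \<le> h i \<and> b \<le> h j \<and> anc a i = anc b j \<and> s = a + b)"

lemma Dm_le: "a \<le> h i \<Longrightarrow> b \<le> h j \<Longrightarrow> anc a i = anc b j \<Longrightarrow> Dm i j \<le> a + b"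
  unfolding Dm_def by (rule Least_le) blast

lemma Dm_att: assumes "i < L" "j < L"
  shows "\<exists>a b. a \<le> h i \<and> b \<le> h j \<and> anc a i = anc b j \<and> Dm i j = a + b"
proof -
  have "\<exists>s a b. a \<le> h i \<and> b \<le> h j \<and> anc a i = anc b j \<and> s = a + b"
    using anc_h assms by (intro exI[of _ "h i + h j"] exI[of _ "h i"] exI[of _ "h j"]) simp
  from LeastI_ex[OF this] show ?thesis unfolding Dm_def by blast
qed

lemma meet_h: "i < L \<Longrightarrow> j < L \<Longrightarrow> a \<le> h i \<Longrightarrow> b \<le> h j \<Longrightarrow> anc a i = anc b j
   \<Longrightarrow> h i - a = h j - b"
  using h_anc by metis

lemma walk_up: "v < L \<Longrightarrow> a \<le> h v \<Longrightarrow> walk E a v (anc a v)"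
proof (induction a)
  case 0 thus ?case by (simp add: walk_refl)
next
  case (Suc a)
  have w: "walk E a v (anc a v)" using Suc by simp
  have "h (anc a v) \<noteq> 0" using h_anc[of v a] Suc.prems by simp
  hence nz: "anc a v \<noteq> 0" using h0 by metis
  have "E (anc a v) (par (anc a v))" using par[OF anc_lt[OF Suc.prems(1)] nz] by simp
  thus ?case using walk_snoc[OF w] by (simp add: anc_Suc)
qed

lemma Dm_walk: assumes "i < L" "j < L" shows "walk E (Dm i j) i j"
proof -
  obtain a b where ab: "a \<le> h i" "b \<le> h j" "anc a i = anc b j" "Dm i j = a + b"
    using Dm_att[OF assms] by blast
  have w1: "walk E a i (anc a i)" by (rule walk_up[OF assms(1) ab(1)])
  have w2: "walk E b (anc a i) j" using walk_sym[OF Esym walk_up[OF assms(2) ab(2)]] ab(3) by simp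
  show ?thesis using walk_app[OF w1 w2] ab(4) by simp
qed

lemma walk_meet: "walk E n i j \<Longrightarrow> j < L \<Longrightarrow>
   i < L \<and> (\<exists>a b. a \<le> h i \<and> b \<le> h j \<and> anc a i = anc b j \<and> a + b \<le> n)"
proof (induction rule: walk.induct)
  case (walk_refl i)
  thus ?case by (intro conjI exI[of _ 0]) auto
next
  case (walk_step i k n j)
  have iL: "i < L" "k < L" using Ebound[OF walk_step.hyps(1)] by auto
  from walk_step.IH walk_step.prems obtain a b where
    ab: "a \<le> h k" "b \<le> h j" "anc a k = anc b j" "a + b \<le> n" by blast
  from edge_cases[OF walk_step.hyps(1)] show ?case
  proof
    assume c: "i \<noteq> 0 \<and> k = par i"
    have "h k + 1 = h i" using par[OF iL(1)] c by simp
    moreover have "anc (Suc a) i = anc b j" using ab(3) c by (simp add: anc_Suc')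
    ultimately show ?thesis using ab iL by (intro conjI exI[of _ "Suc a"] exI[of _ b]) auto
  next
    assume c: "k \<noteq> 0 \<and> i = par k"
    have hk: "h i + 1 = h k" using par[OF iL(2)] c by simp
    show ?thesis
    proof (cases a)
      case (Suc a')
      have "anc a' i = anc b j" using ab(3) c Suc by (simp add: anc_Suc')
      thus ?thesis using ab iL hk Suc by (intro conjI exI[of _ a'] exI[of _ b]) auto
    next
      case 0
      have kk: "k = anc b j" using ab(3) 0 by simp
      have "anc (Suc b) j = i" using kk c by (simp add: anc_Suc)
      moreover have "h k = h j - b" using kk h_anc walk_step.prems by simp
      ultimately show ?thesis using ab iL hk 0 by (intro conjI exI[of _ 0] exI[of _ "Suc b"]) auto
    qed
  qed
qed

lemma tdist_Dm: assumes "i < L" "j < L" shows "tdist E i j = Dm i j"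
proof (rule antisym)
  show "tdist E i j \<le> Dm i j" using Dm_walk[OF assms] by (rule tdist_le)
  obtain a b where "a \<le> h i" "b \<le> h j" "anc a i = anc b j" "a + b \<le> tdist E i j"
    using walk_meet[OF tdist_walk[OF assms] assms(2)] by blast
  thus "Dm i j \<le> tdist E i j" using Dm_le by (meson le_trans)
qed

definition sub where "sub v j d \<longleftrightarrow> anc d j = v \<and> h j = h v + d"

lemma sub_uniq: "sub v j d1 \<Longrightarrow> sub v j d2 \<Longrightarrow> d1 = d2"
  by (simp add: sub_def)

lemma sub_0: "sub v j 0 \<longleftrightarrow> j = v" by (auto simp: sub_def)

lemma Dm_sub: assumes "v < L" "j < L" "sub v j d" shows "Dm v j = d"
proof (rule antisym)
  have s: "anc d j = v" "h j = h v + d" using assms(3) by (auto simp: sub_def)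
  show "Dm v j \<le> d" using Dm_le[of 0 v d j] s by simp
  obtain a b where ab: "a \<le> h v" "b \<le> h j" "anc a v = anc b j" "Dm v j = a + b"
    using Dm_att[OF assms(1,2)] by blast
  have "h v - a = h j - b" using meet_h[OF assms(1,2) ab(1-3)] .
  thus "d \<le> Dm v j" using ab s by linarith
qed

lemma Dm_sub_par: assumes "v < L" "v \<noteq> 0" "j < L" "sub v j d" shows "Dm (par v) j = Suc d"
proof (rule antisym)
  have s: "anc d j = v" "h j = h v + d" using assms(4) by (auto simp: sub_def)
  have hp: "h (par v) + 1 = h v" using par[OF assms(1,2)] by simp
  have "anc (Suc d) j = par v" using s by (simp add: anc_Suc)
  thus "Dm (par v) j \<le> Suc d" using Dm_le[of 0 "par v" "Suc d" j] s hp by simp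
  obtain a b where ab: "a \<le> h (par v)" "b \<le> h j" "anc a (par v) = anc b j" "Dm (par v) j = a + b"
    using Dm_att[OF par_lt[OF assms(1)] assms(3)] by blast
  have "h (par v) - a = h j - b" using meet_h[OF par_lt[OF assms(1)] assms(3) ab(1-3)] .
  thus "Suc d \<le> Dm (par v) j" using ab s hp by linarith
qed

lemma Dm_nsub: assumes "v < L" "v \<noteq> 0" "j < L" "\<forall>d. \<not> sub v j d"
  shows "Dm v j = Suc (Dm (par v) j)"
proof (rule antisym)
  have hp: "h (par v) + 1 = h v" using par[OF assms(1,2)] by simp
  obtain a b where ab: "a \<le> h (par v)" "b \<le> h j" "anc a (par v) = anc b j" "Dm (par v) j = a + b"
    using Dm_att[OF par_lt[OF assms(1)] assms(3)] by blast
  have "anc (Suc a) v = anc b j" using ab(3) by (simp add: anc_Suc')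
  hence "Dm v j \<le> Suc a + b" using Dm_le[of "Suc a" v b j] ab hp by simp
  thus "Dm v j \<le> Suc (Dm (par v) j)" using ab by simp
  obtain a b where ab: "a \<le> h v" "b \<le> h j" "anc a v = anc b j" "Dm v j = a + b"
    using Dm_att[OF assms(1,3)] by blast
  have mh: "h v - a = h j - b" using meet_h[OF assms(1,3) ab(1-3)] .
  show "Suc (Dm (par v) j) \<le> Dm v j"
  proof (cases a)
    case 0
    have "sub v j b" using ab mh 0 by (auto simp: sub_def)
    thus ?thesis using assms(4) by blast
  next
    case (Suc a')
    have "anc a' (par v) = anc b j" using ab(3) Suc by (simp add: anc_Suc')
    hence "Dm (par v) j \<le> a' + b" using Dm_le[of a' "par v" b j] ab hp Suc by simp
    thus ?thesis using ab Suc by simp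
  qed
qed

lemma Dm_0_iff: assumes "v < L" "j < L" shows "Dm v j = 0 \<longleftrightarrow> j = v"
proof
  assume "Dm v j = 0"
  then obtain a b where "anc a v = anc b j" "a = 0" "b = 0" using Dm_att[OF assms] by auto
  thus "j = v" by simp
next
  assume "j = v" thus "Dm v j = 0" using Dm_le[of 0 v 0 v] by simp
qed

lemma sub_root: "j < L \<Longrightarrow> sub 0 j d \<longleftrightarrow> d = h j"
  using anc_h h0 by (auto simp: sub_def)

lemma Dm_root: "j < L \<Longrightarrow> Dm 0 j = h j"
  using Dm_sub[of 0 j "h j"] sub_root Lpos by simp

end


context tr begin

definition Cs where "Cs x v d = (\<Sum>j<L. if sub v j d then x j else (0::real))"
definition Ss where "Ss x v d = (\<Sum>j<L. if Dm v j = d then x j else (0::real))"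

lemma Cs0: "v < L \<Longrightarrow> Cs x v 0 = x v"
  by (simp add: Cs_def sub_0)

lemma sub_Suc: assumes "j < L"
  shows "sub v j (Suc d) \<longleftrightarrow> (anc d j \<noteq> 0 \<and> par (anc d j) = v \<and> sub (anc d j) j d)"
proof -
  have cL: "anc d j < L" using anc_lt assms by simp
  have hc: "h (anc d j) = h j - d" using h_anc assms by simp
  show ?thesis
  proof
    assume s: "sub v j (Suc d)"
    hence a: "par (anc d j) = v" "h j = h v + Suc d" by (auto simp: sub_def anc_Suc)
    hence "h (anc d j) \<noteq> 0" using hc by simp
    hence "anc d j \<noteq> 0" using h0 by metis
    thus "anc d j \<noteq> 0 \<and> par (anc d j) = v \<and> sub (anc d j) j d" using a hc by (simp add: sub_def)
  next
    assume a: "anc d j \<noteq> 0 \<and> par (anc d j) = v \<and> sub (anc d j) j d"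
    have "h (par (anc d j)) + 1 = h (anc d j)" using par[OF cL] a by simp
    thus "sub v j (Suc d)" using a by (auto simp: sub_def anc_Suc)
  qed
qed

lemma inner_sum: assumes "j < L"
  shows "(\<Sum>c<L. if c \<noteq> 0 \<and> par c = v \<and> sub c j d then x j else (0::real))
         = (if sub v j (Suc d) then x j else 0)"
proof -
  let ?Q = "anc d j \<noteq> 0 \<and> par (anc d j) = v \<and> sub (anc d j) j d"
  have "(\<Sum>c<L. if c \<noteq> 0 \<and> par c = v \<and> sub c j d then x j else (0::real))
        = (\<Sum>c<L. if c = anc d j then (if ?Q then x j else 0) else 0)"
    by (rule sum.cong) (auto simp: sub_def)
  also have "\<dots> = (if ?Q then x j else 0)" using anc_lt[OF assms] by simp
  finally show ?thesis using sub_Suc[OF assms] by simp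
qed

lemma CsSuc: "Cs x v (Suc d) = (\<Sum>c<L. if c \<noteq> 0 \<and> par c = v then Cs x c d else 0)"
proof -
  have "(\<Sum>c<L. if c \<noteq> 0 \<and> par c = v then Cs x c d else 0)
      = (\<Sum>c<L. \<Sum>j<L. if c \<noteq> 0 \<and> par c = v \<and> sub c j d then x j else 0)"
    by (rule sum.cong) (auto simp: Cs_def intro: sum.cong)
  also have "\<dots> = (\<Sum>j<L. \<Sum>c<L. if c \<noteq> 0 \<and> par c = v \<and> sub c j d then x j else 0)"
    by (rule sum.swap)
  also have "\<dots> = (\<Sum>j<L. if sub v j (Suc d) then x j else 0)"
    by (rule sum.cong[OF refl], rule inner_sum, simp)
  finally show ?thesis by (simp add: Cs_def)
qed

definition Qs where "Qs x c d = (\<Sum>c'<Suc c. if c' \<noteq> 0 \<and> par c' = par c then Cs x c' d else 0)"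
definition pv where "pv c = {c'. c' < c \<and> c' \<noteq> 0 \<and> par c' = par c}"
definition chs where "chs v = {c. c < L \<and> c \<noteq> 0 \<and> par c = v}"

lemma fin_pv: "finite (pv c)" by (rule finite_subset[of _ "{..<c}"]) (auto simp: pv_def)
lemma fin_chs: "finite (chs v)" by (rule finite_subset[of _ "{..<L}"]) (auto simp: chs_def)

lemma pv_max: "pv c \<noteq> {} \<Longrightarrow> Max (pv c) < c \<and> Max (pv c) \<noteq> 0 \<and> par (Max (pv c)) = par c"
  using Max_in[OF fin_pv] by (auto simp: pv_def)

lemma chs_max: "chs v \<noteq> {} \<Longrightarrow> Max (chs v) < L \<and> Max (chs v) \<noteq> 0 \<and> par (Max (chs v)) = v"
  using Max_in[OF fin_chs] by (auto simp: chs_def)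

lemma Qs_rec: assumes "c \<noteq> 0"
  shows "Qs x c d = Cs x c d + (if pv c = {} then 0 else Qs x (Max (pv c)) d)"
proof -
  let ?g = "\<lambda>c'. if c' \<noteq> 0 \<and> par c' = par c then Cs x c' d else 0"
  have "Qs x c d = sum ?g {..<c} + Cs x c d" using assms by (simp add: Qs_def)
  moreover have "sum ?g {..<c} = (if pv c = {} then 0 else Qs x (Max (pv c)) d)"
  proof (cases "pv c = {}")
    case True
    hence "\<forall>c'\<in>{..<c}. ?g c' = 0" by (auto simp: pv_def)
    thus ?thesis using True by simp
  next
    case False
    let ?m = "Max (pv c)"
    have m: "?m < c" "?m \<noteq> 0" "par ?m = par c" using pv_max[OF False] by auto
    have "sum ?g {..<c} = sum ?g {..<Suc ?m}"
    proof (rule sum.mono_neutral_right)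
      show "finite {..<c}" by simp
      show "{..<Suc ?m} \<subseteq> {..<c}" using m by auto
      show "\<forall>i\<in>{..<c} - {..<Suc ?m}. ?g i = 0"
      proof
        fix i assume i: "i \<in> {..<c} - {..<Suc ?m}"
        show "?g i = 0"
        proof (rule ccontr)
          assume "?g i \<noteq> 0"
          hence "i \<in> pv c" using i by (auto simp: pv_def split: if_splits)
          hence "i \<le> ?m" using fin_pv by simp
          thus False using i by simp
        qed
      qed
    qed
    also have "\<dots> = Qs x ?m d" using m by (simp add: Qs_def)
    finally show ?thesis using False by simp
  qed
  ultimately show ?thesis by simp
qed

lemma Cs_lst: "Cs x v (Suc d) = (if chs v = {} then 0 else Qs x (Max (chs v)) d)"
proof -
  let ?g = "\<lambda>c'. if c' \<noteq> 0 \<and> par c' = v then Cs x c' d else 0"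
  have "Cs x v (Suc d) = sum ?g {..<L}" by (simp add: CsSuc)
  moreover have "sum ?g {..<L} = (if chs v = {} then 0 else Qs x (Max (chs v)) d)"
  proof (cases "chs v = {}")
    case True
    hence "\<forall>c'\<in>{..<L}. ?g c' = 0" by (auto simp: chs_def)
    thus ?thesis using True by simp
  next
    case False
    let ?m = "Max (chs v)"
    have m: "?m < L" "?m \<noteq> 0" "par ?m = v" using chs_max[OF False] by auto
    have "sum ?g {..<L} = sum ?g {..<Suc ?m}"
    proof (rule sum.mono_neutral_right)
      show "finite {..<L}" by simp
      show "{..<Suc ?m} \<subseteq> {..<L}" using m by auto
      show "\<forall>i\<in>{..<L} - {..<Suc ?m}. ?g i = 0"
      proof
        fix i assume i: "i \<in> {..<L} - {..<Suc ?m}"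
        show "?g i = 0"
        proof (rule ccontr)
          assume "?g i \<noteq> 0"
          hence "i \<in> chs v" using i by (auto simp: chs_def split: if_splits)
          hence "i \<le> ?m" using fin_chs by simp
          thus False using i by simp
        qed
      qed
    qed
    also have "\<dots> = Qs x ?m d" using m by (simp add: Qs_def)
    finally show ?thesis using False by simp
  qed
  ultimately show ?thesis by simp
qed

lemma Ss0: "v < L \<Longrightarrow> Ss x v 0 = x v"
proof -
  assume v: "v < L"
  have "Ss x v 0 = (\<Sum>j<L. if j = v then x j else 0)"
    unfolding Ss_def by (rule sum.cong) (auto simp: Dm_0_iff v)
  thus ?thesis using v by simp
qed

lemma Ss_root: "Ss x 0 d = Cs x 0 d"
  unfolding Ss_def Cs_def by (rule sum.cong) (auto simp: Dm_root sub_root)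

lemma point_rec: assumes "v < L" "v \<noteq> 0" "j < L" "d \<ge> 1"
  shows "(if Dm v j = d then x j else (0::real)) =
    (if sub v j d then x j else 0) + (if Dm (par v) j = d - 1 then x j else 0)
    - (if 2 \<le> d \<and> sub v j (d - 2) then x j else 0)"
proof (cases "\<exists>e. sub v j e")
  case True
  then obtain e where e: "sub v j e" by blast
  have d1: "Dm v j = e" using Dm_sub[OF assms(1,3) e] .
  have d2: "Dm (par v) j = Suc e" using Dm_sub_par[OF assms(1-3) e] .
  have s: "\<And>k. sub v j k \<longleftrightarrow> k = e" using e sub_uniq by blast
  consider (a) "e = d" | (b) "e + 2 = d" | (c) "e \<noteq> d \<and> e + 2 \<noteq> d" by blast
  thus ?thesis
  proof cases
    case a
    have "Suc d \<noteq> d - Suc 0" "\<not> (2 \<le> d \<and> d - 2 = d)" by auto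
    thus ?thesis using assms(4) a by (auto simp add: d1 d2 s)
  next
    case b
    have "Suc e = d - 1" "2 \<le> d" "d - 2 = e" "e \<noteq> d" using b by auto
    thus ?thesis by (simp add: d1 d2 s)
  next
    case c thus ?thesis using assms(4) by (auto simp add: d1 d2 s)
  qed
next
  case False
  have "Dm v j = Suc (Dm (par v) j)" using Dm_nsub[OF assms(1-3)] False by blast
  thus ?thesis using False assms(4) by auto
qed

lemma Ss_rec: assumes "v < L" "v \<noteq> 0" "d \<ge> 1"
  shows "Ss x v d = Cs x v d + Ss x (par v) (d - 1) - (if 2 \<le> d then Cs x v (d - 2) else 0)"
proof -
  have "Ss x v d = (\<Sum>j<L. (if sub v j d then x j else 0) + (if Dm (par v) j = d - 1 then x j else 0)
    - (if 2 \<le> d \<and> sub v j (d - 2) then x j else 0))"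
    unfolding Ss_def by (rule sum.cong[OF refl], rule point_rec[OF assms(1,2) _ assms(3)], simp)
  also have "\<dots> = Cs x v d + Ss x (par v) (d - 1) - (\<Sum>j<L. if 2 \<le> d \<and> sub v j (d - 2) then x j else 0)"
    by (simp add: sum.distrib sum_subtractf Cs_def Ss_def)
  also have "(\<Sum>j<L. if 2 \<le> d \<and> sub v j (d - 2) then x j else 0) = (if 2 \<le> d then Cs x v (d - 2) else 0)"
    by (cases "2 \<le> d") (simp_all add: Cs_def)
  finally show ?thesis .
qed

lemma y_eq: assumes "\<forall>j<L. Dm i j \<le> D"
  shows "(\<Sum>d<Suc D. f d * Ss x i d) = (\<Sum>j<L. f (Dm i j) * x j)"
proof -
  have "(\<Sum>d<Suc D. f d * Ss x i d) = (\<Sum>d<Suc D. \<Sum>j<L. if Dm i j = d then f d * x j else 0)"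
    unfolding Ss_def sum_distrib_left by (intro sum.cong refl) simp
  also have "\<dots> = (\<Sum>j<L. \<Sum>d<Suc D. if Dm i j = d then f d * x j else 0)" by (rule sum.swap)
  also have "\<dots> = (\<Sum>j<L. f (Dm i j) * x j)"
  proof (rule sum.cong)
    fix j assume "j \<in> {..<L}"
    hence "Dm i j < Suc D" using assms by auto
    thus "(\<Sum>d<Suc D. if Dm i j = d then f d * x j else 0) = f (Dm i j) * x j"
      by (simp add: sum.delta)
  qed simp
  finally show ?thesis .
qed

end


fun ival :: "(nat \<Rightarrow> real) \<Rightarrow> (nat \<Rightarrow> real) \<Rightarrow> real list \<Rightarrow> instr \<Rightarrow> real" where
  "ival f x rs (LoadX i) = x i"
| "ival f x rs (LoadF k) = f k"
| "ival f x rs (Const c) = c"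
| "ival f x rs (Add a b) = rs ! a + rs ! b"
| "ival f x rs (Sub a b) = rs ! a - rs ! b"
| "ival f x rs (Mul a b) = rs ! a * rs ! b"

lemma step_eq: "step f x rs i = rs @ [ival f x rs i]"
  by (cases i) auto

lemma exec_snoc: "exec f x (ps @ [i]) = exec f x ps @ [ival f x (exec f x ps) i]"
  by (simp add: exec_def step_eq)

lemma length_exec: "length (exec f x ps) = length ps"
  by (induction ps rule: rev_induct) (auto simp: exec_snoc, simp add: exec_def)

lemma exec_append_take: "take (length ps) (exec f x (ps @ qs)) = exec f x ps"
proof (induction qs rule: rev_induct)
  case Nil thus ?case using length_exec[of f x ps] by simp
next
  case (snoc i qs)
  have "exec f x (ps @ qs @ [i]) = exec f x (ps @ qs) @ [ival f x (exec f x (ps @ qs)) i]"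
    using exec_snoc[of f x "ps @ qs" i] by simp
  moreover have "length ps \<le> length (exec f x (ps @ qs))" by (simp add: length_exec)
  ultimately show ?case using snoc by simp
qed

lemma exec_take: "exec f x (take k ps) = take k (exec f x ps)"
proof (cases "k \<le> length ps")
  case True
  have "take (length (take k ps)) (exec f x (take k ps @ drop k ps)) = exec f x (take k ps)"
    by (rule exec_append_take)
  thus ?thesis using True by simp
next
  case False thus ?thesis by (simp add: length_exec)
qed

lemma exec_nth_raw: assumes "k < length ps"
  shows "exec f x ps ! k = ival f x (exec f x (take k ps)) (ps ! k)"
proof -
  have "exec f x ps ! k = take (Suc k) (exec f x ps) ! k" by simp
  also have "\<dots> = exec f x (take (Suc k) ps) ! k" by (simp add: exec_take)
  also have "take (Suc k) ps = take k ps @ [ps ! k]" using assms by (simp add: take_Suc_conv_app_nth)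
  finally show ?thesis using assms by (simp add: exec_snoc nth_append length_exec)
qed

lemma ival_cong: "instr_ok k i \<Longrightarrow> (\<forall>a<k. rs ! a = rs' ! a) \<Longrightarrow> ival f x rs i = ival f x rs' i"
  by (cases i) auto

lemma exec_nth: assumes "wf_prog ps" "k < length ps"
  shows "exec f x ps ! k = ival f x (exec f x ps) (ps ! k)"
proof -
  have ok: "instr_ok k (ps ! k)" using assms by (simp add: wf_prog_def)
  have "\<forall>a<k. exec f x (take k ps) ! a = exec f x ps ! a" by (simp add: exec_take)
  thus ?thesis using exec_nth_raw[OF assms(2)] ival_cong[OF ok] by metis
qed

definition blocks :: "nat \<Rightarrow> nat \<Rightarrow> (nat \<Rightarrow> nat \<Rightarrow> instr) \<Rightarrow> instr list" where
  "blocks n m g = concat (map (\<lambda>a. map (g a) [0..<n]) [0..<m])"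

lemma blocks_Suc: "blocks n (Suc m) g = blocks n m g @ map (g m) [0..<n]"
  by (simp add: blocks_def)

lemma length_blocks: "length (blocks n m g) = m * n"
  by (induction m) (simp_all add: blocks_def)

lemma ab_lt: "a < m \<Longrightarrow> b < (n::nat) \<Longrightarrow> a * n + b < m * n"
proof -
  assume "a < m" "b < n"
  hence "Suc a * n \<le> m * n" by (intro mult_le_mono1) simp
  thus ?thesis using \<open>b < n\<close> by simp
qed

lemma nth_blocks: "a < m \<Longrightarrow> b < n \<Longrightarrow> blocks n m g ! (a * n + b) = g a b"
proof (induction m)
  case 0 thus ?case by simp
next
  case (Suc m)
  show ?case
  proof (cases "a < m")
    case True
    thus ?thesis using Suc ab_lt[OF True Suc.prems(2)]
      by (simp add: blocks_Suc nth_append length_blocks)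
  next
    case False
    hence "a = m" using Suc by simp
    thus ?thesis using Suc.prems by (simp add: blocks_Suc nth_append length_blocks)
  qed
qed

lemma decomp: fixes k base m n :: nat assumes "base \<le> k" "k < base + m * n"
  shows "\<exists>a<m. \<exists>b<n. k = base + a * n + b"
proof -
  have n: "n > 0" using assms by (cases n) auto
  have "(k - base) div n < m" using assms by (intro less_mult_imp_div_less) simp
  moreover have "(k - base) mod n < n" using n by simp
  moreover have "k = base + (k - base) div n * n + (k - base) mod n" using assms(1)
    by (simp add: div_mult_mod_eq)
  ultimately show ?thesis by blast
qed



context tr begin

definition "DD = tdiam L E"
definition qpos where "qpos d c = 1 + L + d * L + c"
definition cidx where
  "cidx d v = (if d = 0 then 1 + v else if chs v = {} then 0 else qpos (d - 1) (Max (chs v)))"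
definition qprev where "qprev d c = (if pv c = {} then 0 else qpos d (Max (pv c)))"
definition qins where "qins d c = Add (cidx d c) (qprev d c)"
definition baseS where "baseS = 1 + L + DD * L"
definition spos where "spos a t = baseS + a * (2 * L) + t"
definition sidx where "sidx d v = (if d = 0 then 1 + v else spos (d - 1) (2 * v + 1))"
definition sins where
  "sins a t = (if even t then Add (cidx (Suc a) (t div 2)) (if t div 2 = 0 then 0 else sidx a (par (t div 2)))
     else Sub (spos a (t - 1)) (if t div 2 = 0 \<or> a = 0 then 0 else cidx (a - 1) (t div 2)))"
definition baseF where "baseF = baseS + DD * (2 * L)"
definition rpos where "rpos i t = baseF + Suc DD + i * (2 * Suc DD) + t"
definition rins where
  "rins i t = (if even t then Mul (baseF + t div 2) (sidx (t div 2) i)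
     else Add (if t div 2 = 0 then 0 else rpos i (t - 2)) (rpos i (t - 1)))"
definition prog where
  "prog = [Const 0] @ map LoadX [0..<L] @ blocks L DD qins @ blocks (2 * L) DD sins
     @ map LoadF [0..<Suc DD] @ blocks (2 * Suc DD) L rins"
definition outs where "outs = map (\<lambda>i. rpos i (2 * DD + 1)) [0..<L]"

lemma len_prog: "length prog = baseF + Suc DD + L * (2 * Suc DD)"
  by (simp add: prog_def length_blocks baseF_def baseS_def algebra_simps)

lemma prog_0: "prog ! 0 = Const 0" by (simp add: prog_def)

lemma prog_x: "v < L \<Longrightarrow> prog ! (1 + v) = LoadX v"
  by (simp add: prog_def nth_append)

lemma prog_q: assumes "d < DD" "c < L" shows "prog ! (qpos d c) = qins d c"
proof -
  have "d * L + c < DD * L" by (rule ab_lt[OF assms])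
  thus ?thesis using assms by (simp add: prog_def qpos_def nth_append length_blocks nth_blocks)
qed

lemma prog_s: assumes "a < DD" "t < 2 * L" shows "prog ! (spos a t) = sins a t"
proof -
  have "a * (2 * L) + t < DD * (2 * L)" by (rule ab_lt[OF assms])
  thus ?thesis using assms
    by (simp add: prog_def spos_def baseS_def nth_append length_blocks nth_blocks)
qed

lemma prog_f: assumes "d \<le> DD" shows "prog ! (baseF + d) = LoadF d"
  using assms by (simp add: prog_def baseF_def baseS_def nth_append length_blocks)

lemma prog_r: assumes "i < L" "t < 2 * Suc DD" shows "prog ! (rpos i t) = rins i t"
proof -
  define Pre where "Pre = [Const 0] @ map LoadX [0..<L] @ blocks L DD qins @ blocks (2 * L) DD sins
     @ map LoadF [0..<Suc DD]"
  have p: "prog = Pre @ blocks (2 * Suc DD) L rins" by (simp add: prog_def Pre_def)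
  have l: "length Pre = baseF + Suc DD"
    by (simp add: Pre_def length_blocks baseF_def baseS_def algebra_simps)
  have "prog ! (rpos i t) = (Pre @ blocks (2 * Suc DD) L rins) ! (length Pre + (i * (2 * Suc DD) + t))"
    using p l by (simp add: rpos_def add.assoc)
  also have "\<dots> = blocks (2 * Suc DD) L rins ! (i * (2 * Suc DD) + t)" by (rule nth_append_length_plus)
  also have "\<dots> = rins i t" by (rule nth_blocks[OF assms])
  finally show ?thesis .
qed

lemma cidx_lt: assumes v: "v < L" shows "cidx d v < qpos d 0"
proof (cases d)
  case 0 thus ?thesis using v by (simp add: cidx_def qpos_def)
next
  case (Suc d')
  show ?thesis
  proof (cases "chs v = {}")
    case True thus ?thesis using Suc by (simp add: cidx_def qpos_def)
  next
    case False
    have "Max (chs v) < L" using chs_max[OF False] by simp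
    thus ?thesis using Suc False by (simp add: cidx_def qpos_def)
  qed
qed

lemma qpos_le_baseS: "d \<le> DD \<Longrightarrow> qpos d 0 \<le> baseS"
  by (simp add: qpos_def baseS_def)

lemma sidx_lt: assumes "d \<le> DD" "v < L" shows "sidx d v < baseF"
proof (cases d)
  case 0 thus ?thesis using assms by (simp add: sidx_def baseF_def baseS_def)
next
  case (Suc d')
  have "d' * (2 * L) + (2 * v + 1) < DD * (2 * L)" using assms Suc by (intro ab_lt) auto
  thus ?thesis using Suc by (simp add: sidx_def spos_def baseF_def)
qed

lemma wf: "wf_prog prog"
  unfolding wf_prog_def
proof (intro allI impI)
  fix k assume k: "k < length prog"
  have L1: "L \<ge> 1" by (rule Lpos)
  consider (z) "k = 0" | (x) "1 \<le> k \<and> k < 1 + L" | (q) "1 + L \<le> k \<and> k < baseS"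
    | (s) "baseS \<le> k \<and> k < baseF" | (f) "baseF \<le> k \<and> k < baseF + Suc DD"
    | (r) "baseF + Suc DD \<le> k" by linarith
  thus "instr_ok k (prog ! k)"
  proof cases
    case z thus ?thesis by (simp add: prog_0)
  next
    case x
    then obtain v where "k = 1 + v" "v < L" by (metis add.commute le_add_diff_inverse2 add_less_cancel_right)
    thus ?thesis using prog_x[of v] by simp
  next
    case q
    then obtain d c where dc: "d < DD" "c < L" "k = 1 + L + d * L + c"
      using decomp[of "1 + L" k DD L] by (auto simp: baseS_def)
    hence kq: "k = qpos d c" by (simp add: qpos_def)
    have "cidx d c < qpos d 0" using cidx_lt dc by simp
    hence "cidx d c < k" using kq by (simp add: qpos_def)
    moreover have "qprev d c < k"
    proof (cases "pv c = {}")
      case True thus ?thesis using kq by (simp add: qprev_def qpos_def)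
    next
      case False thus ?thesis using kq pv_max[OF False] by (simp add: qprev_def qpos_def)
    qed
    ultimately show ?thesis using kq prog_q dc by (simp add: qins_def)
  next
    case s
    then obtain a t where at: "a < DD" "t < 2 * L" "k = baseS + a * (2 * L) + t"
      using decomp[of baseS k DD "2 * L"] by (auto simp: baseF_def)
    hence ks: "k = spos a t" by (simp add: spos_def)
    have vL: "t div 2 < L" using at by simp
    have c1: "cidx (Suc a) (t div 2) < k"
      using cidx_lt[OF vL, of "Suc a"] qpos_le_baseS[of "Suc a"] at ks by (simp add: spos_def)
    have "a - 1 \<le> DD" using at by simp
    hence c2: "cidx (a - 1) (t div 2) < k"
      using cidx_lt[OF vL, of "a - 1"] qpos_le_baseS[of "a - 1"] at ks by (simp add: spos_def)
    have c3: "t div 2 \<noteq> 0 \<Longrightarrow> sidx a (par (t div 2)) < k"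
    proof -
      assume nz: "t div 2 \<noteq> 0"
      have pL: "par (t div 2) < L" using par_lt vL by simp
      show ?thesis
      proof (cases a)
        case 0 thus ?thesis using pL ks by (simp add: sidx_def spos_def baseS_def)
      next
        case (Suc a')
        have "a' * (2 * L) + (2 * par (t div 2) + 1) < a * (2 * L)"
          using ab_lt[of a' a "2 * par (t div 2) + 1" "2 * L"] Suc pL by simp
        thus ?thesis using Suc ks by (simp add: sidx_def spos_def)
      qed
    qed
    show ?thesis
    proof (cases "even t")
      case True thus ?thesis using c1 c3 ks prog_s[OF at(1,2)] by (simp add: sins_def)
    next
      case False
      hence "t \<ge> 1" by (cases t) auto
      hence "spos a (t - 1) < k" using ks by (simp add: spos_def)
      thus ?thesis using False c2 ks prog_s[OF at(1,2)] by (simp add: sins_def)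
    qed
  next
    case f
    then obtain d where "k = baseF + d" "d \<le> DD" by (metis add_less_cancel_left le_add_diff_inverse less_Suc_eq_le)
    thus ?thesis by (simp add: prog_f)
  next
    case r
    then obtain i t where it: "i < L" "t < 2 * Suc DD" "k = baseF + Suc DD + i * (2 * Suc DD) + t"
      using decomp[of "baseF + Suc DD" k L "2 * Suc DD"] k len_prog by auto
    hence kr: "k = rpos i t" by (simp add: rpos_def)
    show ?thesis
    proof (cases "even t")
      case True
      have "t div 2 \<le> DD" using it by simp
      have "sidx (t div 2) i < baseF" using sidx_lt[OF \<open>t div 2 \<le> DD\<close> it(1)] .
      hence "sidx (t div 2) i < k" "baseF + t div 2 < k"
        using \<open>t div 2 \<le> DD\<close> kr by (auto simp: rpos_def)
      thus ?thesis using True kr prog_r[OF it(1,2)] by (simp add: rins_def)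
    next
      case False
      have "t \<ge> 1" using False by (cases t) auto
      moreover have "t div 2 \<noteq> 0 \<Longrightarrow> t \<ge> 2" by auto
      ultimately have "rpos i (t - 1) < k" "t div 2 \<noteq> 0 \<Longrightarrow> rpos i (t - 2) < k"
        using kr by (auto simp: rpos_def)
      thus ?thesis using False kr prog_r[OF it(1,2)] by (simp add: rins_def)
    qed
  qed
qed

end


context tr begin

lemma V_at: "k < length prog \<Longrightarrow> exec f x prog ! k = ival f x (exec f x prog) (prog ! k)"
  by (rule exec_nth[OF wf])

lemma baseS_le: "baseS \<le> length prog" by (simp add: len_prog baseF_def)

lemma V0: "exec f x prog ! 0 = 0"
  using V_at[of 0] len_prog by (simp add: prog_0)

lemma Vx: "v < L \<Longrightarrow> exec f x prog ! Suc v = x v"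
  using V_at[of "Suc v"] prog_x[of v] baseS_le by (simp add: baseS_def)

lemma qpos_lt: assumes "d < DD" "c < L" shows "qpos d c < length prog"
proof -
  have "d * L + c < DD * L" by (rule ab_lt[OF assms])
  thus ?thesis using baseS_le by (simp add: qpos_def baseS_def)
qed

lemma spos_lt: assumes "a < DD" "t < 2 * L" shows "spos a t < length prog"
proof -
  have "a * (2 * L) + t < DD * (2 * L)" by (rule ab_lt[OF assms])
  hence "spos a t < baseF" by (simp add: spos_def baseF_def)
  thus ?thesis using len_prog by simp
qed

lemma rpos_lt: assumes "i < L" "t < 2 * Suc DD" shows "rpos i t < length prog"
proof -
  have "i * (2 * Suc DD) + t < L * (2 * Suc DD)" by (rule ab_lt[OF assms])
  thus ?thesis by (simp add: rpos_def len_prog)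
qed

lemma VQ: assumes "d < DD" "\<forall>v<L. exec f x prog ! cidx d v = Cs x v d"
  shows "c < L \<Longrightarrow> c \<noteq> 0 \<Longrightarrow> exec f x prog ! qpos d c = Qs x c d"
proof (induction c rule: less_induct)
  case (less c)
  have "exec f x prog ! qpos d c = exec f x prog ! cidx d c + exec f x prog ! qprev d c"
    using V_at[OF qpos_lt[OF assms(1) less.prems(1)]] prog_q[OF assms(1) less.prems(1)]
    by (simp add: qins_def)
  also have "exec f x prog ! qprev d c = (if pv c = {} then 0 else Qs x (Max (pv c)) d)"
  proof (cases "pv c = {}")
    case True thus ?thesis by (simp add: qprev_def V0)
  next
    case False
    have m: "Max (pv c) < c" "Max (pv c) \<noteq> 0" using pv_max[OF False] by auto
    thus ?thesis using False less.IH[OF m(1) _ m(2)] less.prems by (simp add: qprev_def)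
  qed
  finally show ?case using assms(2) less.prems Qs_rec by simp
qed

lemma VC: "d \<le> DD \<Longrightarrow> \<forall>v<L. exec f x prog ! cidx d v = Cs x v d"
proof (induction d)
  case 0 thus ?case by (simp add: cidx_def Vx Cs0)
next
  case (Suc d)
  have d: "d < DD" using Suc by simp
  have IH: "\<forall>v<L. exec f x prog ! cidx d v = Cs x v d" using Suc by simp
  show ?case
  proof (intro allI impI)
    fix v assume v: "v < L"
    show "exec f x prog ! cidx (Suc d) v = Cs x v (Suc d)"
    proof (cases "chs v = {}")
      case True thus ?thesis by (simp add: cidx_def V0 Cs_lst)
    next
      case False
      have m: "Max (chs v) < L" "Max (chs v) \<noteq> 0" using chs_max[OF False] by auto
      thus ?thesis using False VQ[OF d IH m] by (simp add: cidx_def Cs_lst)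
    qed
  qed
qed

lemma VS: "d \<le> DD \<Longrightarrow> v < L \<Longrightarrow> exec f x prog ! sidx d v = Ss x v d"
proof (induction d arbitrary: v)
  case 0 thus ?case by (simp add: sidx_def Vx Ss0)
next
  case (Suc a)
  have a: "a < DD" using Suc by simp
  have t1: "2 * v + 1 < 2 * L" "2 * v < 2 * L" using Suc by auto
  let ?V = "exec f x prog"
  have e1: "?V ! spos a (2 * v) = ?V ! cidx (Suc a) v + ?V ! (if v = 0 then 0 else sidx a (par v))"
    using V_at[OF spos_lt[OF a t1(2)]] prog_s[OF a t1(2)] by (simp add: sins_def)
  have e2: "?V ! spos a (2 * v + 1) = ?V ! spos a (2 * v) - ?V ! (if v = 0 \<or> a = 0 then 0 else cidx (a - 1) v)"
    using V_at[OF spos_lt[OF a t1(1)]] prog_s[OF a t1(1)] by (simp add: sins_def)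
  have c1: "?V ! cidx (Suc a) v = Cs x v (Suc a)" using VC[of "Suc a"] Suc by simp
  show ?case
  proof (cases "v = 0")
    case True
    thus ?thesis using e1 e2 c1 by (simp add: sidx_def V0 Ss_root)
  next
    case False
    have s1: "?V ! sidx a (par v) = Ss x (par v) a" using Suc.IH[of "par v"] Suc.prems par_lt by simp
    have c2: "a \<noteq> 0 \<Longrightarrow> ?V ! cidx (a - 1) v = Cs x v (a - 1)" using VC[of "a - 1"] Suc by simp
    have r: "Ss x v (Suc a) = Cs x v (Suc a) + Ss x (par v) a - (if 2 \<le> Suc a then Cs x v (a - 1) else 0)"
      using Ss_rec[OF Suc.prems(2) False, of "Suc a" x] by simp
    show ?thesis
    proof (cases "a = 0")
      case True thus ?thesis using e1 e2 c1 s1 r False by (simp add: sidx_def V0)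
    next
      case False2: False
      thus ?thesis using e1 e2 c1 s1 r False c2 by (simp add: sidx_def)
    qed
  qed
qed

lemma VM: assumes "i < L" "d \<le> DD" shows "exec f x prog ! rpos i (2 * d) = f d * Ss x i d"
proof -
  have t: "2 * d < 2 * Suc DD" using assms by simp
  have "exec f x prog ! (baseF + d) = f d"
    using V_at[of "baseF + d"] prog_f[OF assms(2)] assms len_prog by simp
  thus ?thesis using V_at[OF rpos_lt[OF assms(1) t]] prog_r[OF assms(1) t] VS[OF assms(2,1)]
    by (simp add: rins_def)
qed

lemma VA: assumes "i < L" "d \<le> DD"
  shows "exec f x prog ! rpos i (2 * d + 1) =
    (if d = 0 then 0 else exec f x prog ! rpos i (2 * d - 1)) + exec f x prog ! rpos i (2 * d)"
proof -
  have t: "2 * d + 1 < 2 * Suc DD" using assms by simp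
  have "(2 * d + 1) div 2 = d" by simp
  moreover have "2 * d + 1 - 2 = 2 * d - 1" "2 * d + 1 - 1 = 2 * d" by simp_all
  ultimately show ?thesis using V_at[OF rpos_lt[OF assms(1) t]] prog_r[OF assms(1) t] V0
    by (simp add: rins_def)
qed

lemma VR: "i < L \<Longrightarrow> d \<le> DD \<Longrightarrow> exec f x prog ! rpos i (2 * d + 1) = (\<Sum>d'<Suc d. f d' * Ss x i d')"
proof (induction d)
  case 0 thus ?case using VA[of i 0] VM[of i 0] by simp
next
  case (Suc d)
  have "exec f x prog ! rpos i (2 * Suc d + 1) = exec f x prog ! rpos i (2 * d + 1) + exec f x prog ! rpos i (2 * Suc d)"
    using VA[of i "Suc d"] Suc.prems by simp
  thus ?case using Suc VM[of i "Suc d"] by simp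
qed

end


context tr begin

lemma Dm_le_DD: assumes "i < L" "j < L" shows "Dm i j \<le> DD"
proof -
  have "{tdist E i j | i j. i < L \<and> j < L} = (\<lambda>(i, j). tdist E i j) ` ({..<L} \<times> {..<L})" by auto
  hence fin: "finite {tdist E i j | i j. i < L \<and> j < L}" by simp
  have "tdist E i j \<in> {tdist E i j | i j. i < L \<and> j < L}" using assms by blast
  hence "tdist E i j \<le> tdiam L E" unfolding tdiam_def using fin by simp
  thus ?thesis using tdist_Dm[OF assms] by (simp add: DD_def)
qed

lemma main:
  "wf_prog prog \<and> length outs = L \<and> (\<forall>r\<in>set outs. r < length prog)
   \<and> length prog \<le> 11 * L * max 1 (tdiam L E)
   \<and> (\<forall>(f::nat \<Rightarrow> real) (x::nat \<Rightarrow> real). \<forall>i<L.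
        exec f x prog ! (outs ! i) = (\<Sum>j<L. f (tdist E i j) * x j))"
proof (intro conjI allI impI ballI)
  show "wf_prog prog" by (rule wf)
  show "length outs = L" by (simp add: outs_def)
  fix r assume "r \<in> set outs"
  then obtain i where "i < L" "r = rpos i (2 * DD + 1)" by (auto simp: outs_def)
  thus "r < length prog" using rpos_lt by simp
next
  let ?M = "max 1 (tdiam L E)"
  have M: "DD \<le> ?M" "1 \<le> ?M" by (auto simp: DD_def)
  have L1: "1 \<le> L" by (rule Lpos)
  have a1: "L * DD \<le> L * ?M" using M by simp
  have a2: "L \<le> L * ?M" using M by simp
  have a3: "1 \<le> L * ?M" using a2 L1 by linarith
  have a4: "DD \<le> L * ?M" using M L1 by (metis le_trans mult_le_mono1 mult_1)
  have "length prog = 2 + 3 * L + DD + 5 * (L * DD)"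
    by (simp add: len_prog baseF_def baseS_def algebra_simps)
  moreover have "11 * L * ?M = 11 * (L * ?M)" by simp
  ultimately show "length prog \<le> 11 * L * ?M" using a1 a2 a3 a4 by linarith
next
  fix f :: "nat \<Rightarrow> real" and x :: "nat \<Rightarrow> real" and i assume i: "i < L"
  have "exec f x prog ! (outs ! i) = exec f x prog ! rpos i (2 * DD + 1)" using i by (simp add: outs_def)
  also have "\<dots> = (\<Sum>d'<Suc DD. f d' * Ss x i d')" using VR[OF i] by simp
  also have "\<dots> = (\<Sum>j<L. f (Dm i j) * x j)" using y_eq Dm_le_DD i by blast
  also have "\<dots> = (\<Sum>j<L. f (tdist E i j) * x j)" using tdist_Dm i by simp
  finally show "exec f x prog ! (outs ! i) = (\<Sum>j<L. f (tdist E i j) * x j)" .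
qed

end

theorem lemma6p2:
  shows "\<exists>C::nat. \<forall>L E. is_tree L E \<longrightarrow>
           (\<exists>prog outs. wf_prog prog
              \<and> length outs = L \<and> (\<forall>r\<in>set outs. r < length prog)
              \<and> length prog \<le> C * L * max 1 (tdiam L E)
              \<and> (\<forall>(f::nat \<Rightarrow> real) (x::nat \<Rightarrow> real). \<forall>i<L.
                    exec f x prog ! (outs ! i) = (\<Sum>j<L. f (tdist E i j) * x j)))"
proof (intro exI[of _ 11] allI impI)
  fix L E assume "is_tree L E"
  then interpret t: tr L E by (rule tr.intro)
  show "\<exists>prog outs. wf_prog prog
              \<and> length outs = L \<and> (\<forall>r\<in>set outs. r < length prog)
              \<and> length prog \<le> 11 * L * max 1 (tdiam L E)
              \<and> (\<forall>(f::nat \<Rightarrow> real) (x::nat \<Rightarrow> real). \<forall>i<L.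
                    exec f x prog ! (outs ! i) = (\<Sum>j<L. f (tdist E i j) * x j))"
    using t.main by blast
qed


end
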